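(* Let $n\ge1$, $R>0$, and let $K\subset\mathbb{R}^{n+1}=\mathbb{R}^n\times\mathbb{R}$ be the closed ball of radius $R$ centered at the origin. Let $G\colon\mathbb{R}^n\to\mathbb{R}$ be twice continuously differentiable with $|x|^2+G(x)^2>0$ for all $x$, and define $h\colon\mathbb{R}^n\to\mathbb{R}^n$ by $$h(x)=x-\frac{\sqrt{|x|^2+G(x)^2}-R}{\sqrt{|x|^2+G(x)^2}}\left(x+2\,\frac{G(x)-\langle x,\nabla G(x)\rangle}{1+|\nabla G(x)|^2}\,\nabla G(x)\right).$$ Suppose $h$ is a bijection from $\mathbb{R}^n$ onto an open set $J\subset\mathbb{R}^n$ containing $0$, with nowhere vanishing derivative (Jacobian). Then $G$ is an equidistant function (i.e. there is an admissible $f$ such that the equidistant set of $K$ and the epigraph of $f$ is the graph of $G$) if and only if the pair $x(t):=h^{-1}(t)$, $y(t):=G(x(t))$ ($t\in J$) is the equidistant parameterization for the graph of $G$, i.e. there is an admissible $f$ with $D_f=J$ and $x=x_f$, $y=y_f$ on $J$.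
   Context: $d(p,A)=\inf\{|p-q|\mid q\in A\}$ (Euclidean distance). A function $f\colon\mathbb{R}^n\to(0,\infty)$ is admissible if it is twice continuously differentiable, convex, and $|t|^2+f(t)^2>R^2$ for all $t$; its epigraph is $L_f=\{(t,y)\mid f(t)\le y\}$ and the equidistant set is $\{K=L_f\}=\{p\mid d(p,K)=d(p,L_f)\}$. For admissible $f$ put $\alpha_f(t)=\frac{\langle t,\nabla f(t)\rangle-f(t)}{\sqrt{1+|\nabla f(t)|^2}}$, $D_f=\{t\mid\alpha_f(t)<R\}$, and the equidistant parameterization $x_f\colon D_f\to\mathbb{R}^n$, $y_f\colon D_f\to\mathbb{R}$, $x_f(t)=t+\frac{1}{2\sqrt{1+|\nabla f(t)|^2}}\cdot\frac{|t|^2+f(t)^2-R^2}{R-\alpha_f(t)}\nabla f(t)$, $y_f(t)=f(t)-\frac{1}{2\sqrt{1+|\nabla f(t)|^2}}\cdot\frac{|t|^2+f(t)^2-R^2}{R-\alpha_f(t)}$. *)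

theory Defs
  imports "HOL-Analysis.Analysis"
begin

text \<open>Points of R^n are vectors real^'n; R^(n+1) = R^n x R is the product type,
whose norm is the Euclidean one.\<close>

definition grad :: "(real^'n \<Rightarrow> real) \<Rightarrow> real^'n \<Rightarrow> real^'n" where
  "grad f x = (SOME v. (f has_derivative (\<lambda>h. v \<bullet> h)) (at x))"

definition C2 :: "(real^'n \<Rightarrow> real) \<Rightarrow> bool" where
  "C2 f \<longleftrightarrow> (\<forall>x. f differentiable (at x)) \<and>
     (\<exists>D2 :: real^'n \<Rightarrow> ((real^'n) \<Rightarrow>\<^sub>L (real^'n)).
        (\<forall>x. (grad f has_derivative blinfun_apply (D2 x)) (at x)) \<and> continuous_on UNIV D2)"

definition admissible :: "real \<Rightarrow> (real^'n \<Rightarrow> real) \<Rightarrow> bool" where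
  "admissible R f \<longleftrightarrow> C2 f \<and> convex_on UNIV f \<and> (\<forall>t. f t > 0) \<and>
     (\<forall>t. norm t ^ 2 + (f t) ^ 2 > R ^ 2)"

definition epigraph :: "(real^'n \<Rightarrow> real) \<Rightarrow> ((real^'n) \<times> real) set" where
  "epigraph f = {(t, y). f t \<le> y}"

definition equidistant_set :: "((real^'n) \<times> real) set \<Rightarrow> ((real^'n) \<times> real) set \<Rightarrow> ((real^'n) \<times> real) set" where
  "equidistant_set K L = {p. infdist p K = infdist p L}"

definition alpha_f :: "(real^'n \<Rightarrow> real) \<Rightarrow> real^'n \<Rightarrow> real" where
  "alpha_f f t = (t \<bullet> grad f t - f t) / sqrt (1 + norm (grad f t) ^ 2)"

definition D_f :: "real \<Rightarrow> (real^'n \<Rightarrow> real) \<Rightarrow> (real^'n) set" where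
  "D_f R f = {t. alpha_f f t < R}"

definition x_f :: "real \<Rightarrow> (real^'n \<Rightarrow> real) \<Rightarrow> real^'n \<Rightarrow> real^'n" where
  "x_f R f t = t + ((1 / (2 * sqrt (1 + norm (grad f t) ^ 2))) *
      ((norm t ^ 2 + f t ^ 2 - R ^ 2) / (R - alpha_f f t))) *\<^sub>R grad f t"

definition y_f :: "real \<Rightarrow> (real^'n \<Rightarrow> real) \<Rightarrow> real^'n \<Rightarrow> real" where
  "y_f R f t = f t - (1 / (2 * sqrt (1 + norm (grad f t) ^ 2))) *
      ((norm t ^ 2 + f t ^ 2 - R ^ 2) / (R - alpha_f f t))"

definition hmap :: "real \<Rightarrow> (real^'n \<Rightarrow> real) \<Rightarrow> real^'n \<Rightarrow> real^'n" where
  "hmap R G x = x - ((sqrt (norm x ^ 2 + G x ^ 2) - R) / sqrt (norm x ^ 2 + G x ^ 2)) *\<^sub>R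
      (x + (2 * (G x - x \<bullet> grad G x) / (1 + norm (grad G x) ^ 2)) *\<^sub>R grad G x)"

end

theory Submission
  imports Defs
begin


lemma grad_has_derivative:
  fixes f :: "real^'n \<Rightarrow> real"
  assumes "f differentiable (at x)"
  shows "(f has_derivative (\<lambda>h. grad f x \<bullet> h)) (at x)"
proof -
  obtain D where D: "(f has_derivative D) (at x)" using assms differentiable_def by blast
  have lin: "linear D" using D has_derivative_linear by blast
  have "\<And>h. D h = h \<bullet> adjoint D 1"
    using adjoint_works[OF lin, of _ 1] by simp
  hence "D = (\<lambda>h. adjoint D 1 \<bullet> h)" by (auto simp: inner_commute)
  hence "\<exists>v. (f has_derivative (\<lambda>h. v \<bullet> h)) (at x)" using D by metis
  thus ?thesis unfolding grad_def by (rule someI_ex)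
qed

lemma C2_diff: "C2 f \<Longrightarrow> (f has_derivative (\<lambda>h. grad f x \<bullet> h)) (at x)"
  unfolding C2_def using grad_has_derivative by blast

lemma C2_cont: "C2 f \<Longrightarrow> continuous_on UNIV f"
  unfolding C2_def using differentiable_imp_continuous_within continuous_at_imp_continuous_on by blast

lemma convex_grad_ineq:
  fixes f :: "real^'n \<Rightarrow> real"
  assumes cv: "convex_on UNIV f" and d: "(f has_derivative (\<lambda>h. g \<bullet> h)) (at t)"
  shows "f s \<ge> f t + g \<bullet> (s - t)"
proof -
  define k where "k = (\<lambda>\<theta>::real. f (t + \<theta> *\<^sub>R (s - t)))"
  have "convex_on UNIV k"
  proof (rule convex_onI)
    fix \<tau> a b :: real assume "\<tau> > 0" "\<tau> < 1"
    have "t + ((1 - \<tau>) *\<^sub>R a + \<tau> *\<^sub>R b) *\<^sub>R (s - t) = (1 - \<tau>) *\<^sub>R (t + a *\<^sub>R (s - t)) + \<tau> *\<^sub>R (t + b *\<^sub>R (s - t))"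
      by (simp add: algebra_simps)
    thus "k ((1 - \<tau>) *\<^sub>R a + \<tau> *\<^sub>R b) \<le> (1 - \<tau>) * k a + \<tau> * k b"
      unfolding k_def using convex_onD[OF cv, of \<tau>] \<open>\<tau> > 0\<close> \<open>\<tau> < 1\<close> by simp
  qed simp
  moreover have "(k has_field_derivative (g \<bullet> (s - t))) (at 0 within UNIV)"
  proof -
    have "((\<lambda>\<theta>::real. t + \<theta> *\<^sub>R (s - t)) has_derivative (\<lambda>\<theta>. \<theta> *\<^sub>R (s - t))) (at 0)"
      by (auto intro!: derivative_eq_intros)
    from has_derivative_compose[OF this, of f "\<lambda>h. g \<bullet> h"] d
    have "(k has_derivative (\<lambda>\<theta>. g \<bullet> (\<theta> *\<^sub>R (s - t)))) (at 0)" unfolding k_def by simp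
    moreover have "(\<lambda>\<theta>::real. \<theta> * (g \<bullet> (s - t))) = (*) (g \<bullet> (s - t))" by (auto simp: fun_eq_iff)
    ultimately show ?thesis unfolding has_field_derivative_def by simp
  qed
  ultimately have "k 1 - k 0 \<ge> (g \<bullet> (s - t)) * (1 - 0)"
    by (intro convex_on_imp_above_tangent[where A=UNIV]) auto
  thus ?thesis unfolding k_def by simp
qed

lemma infdist_ge:
  assumes "A \<noteq> {}" "\<And>a. a \<in> A \<Longrightarrow> d \<le> dist x a"
  shows "d \<le> infdist x A"
  using assms by (simp add: infdist_notempty cINF_greatest)

lemma infdist_cball_ge:
  fixes p :: "'a::real_normed_vector"
  assumes "R \<ge> 0"
  shows "norm p - R \<le> infdist p (cball 0 R)"
proof (rule infdist_ge)
  show "cball 0 R \<noteq> {}" using assms by simp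
  fix a assume "a \<in> cball (0::'a) R"
  hence "norm a \<le> R" by simp
  moreover have "norm p - norm a \<le> dist p a" by (metis dist_norm norm_triangle_ineq2)
  ultimately show "norm p - R \<le> dist p a" by linarith
qed

lemma infdist_cball:
  fixes p :: "'a::real_normed_vector"
  assumes "R \<ge> 0" "norm p \<ge> R"
  shows "infdist p (cball 0 R) = norm p - R"
proof (rule antisym)
  have np: "norm p > 0 \<or> R = 0" using assms by auto
  define a where "a = (R / norm p) *\<^sub>R p"
  show "infdist p (cball 0 R) \<le> norm p - R"
  proof (cases "R = 0")
    case True thus ?thesis using infdist_le[of 0 "cball 0 R" p] by (simp add: dist_norm)
  next
    case False
    hence npos: "norm p > 0" using assms by auto
    have "a \<in> cball 0 R" using assms npos by (simp add: a_def)
    moreover have "dist p a = norm p - R"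
    proof -
      have "p - a = (1 - R / norm p) *\<^sub>R p" by (simp add: a_def algebra_simps)
      hence "norm (p - a) = \<bar>1 - R / norm p\<bar> * norm p" by simp
      also have "\<dots> = norm p - R" using npos assms by (simp add: field_simps abs_if)
      finally show ?thesis by (simp add: dist_norm)
    qed
    ultimately show ?thesis by (metis infdist_le)
  qed
qed (use infdist_cball_ge assms in auto)



lemma epi_closed: "C2 f \<Longrightarrow> closed (epigraph f)"
proof -
  assume "C2 f"
  hence c: "continuous_on UNIV f" by (rule C2_cont)
  have "epigraph f = {z. f (fst z) \<le> snd z}" by (auto simp: epigraph_def)
  moreover have "closed {z. f (fst z) \<le> snd z}"
    by (intro closed_Collect_le continuous_on_compose2[OF c] continuous_intros) auto
  ultimately show ?thesis by simp
qed

lemma epi_open: "C2 f \<Longrightarrow> open {z. f (fst z) < snd z}"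
proof -
  assume "C2 f"
  hence c: "continuous_on UNIV f" by (rule C2_cont)
  show "open {z. f (fst z) < snd z}"
    by (intro open_Collect_less continuous_on_compose2[OF c] continuous_intros) auto
qed

lemma norm_Pair_sq: "norm (a, b::real) ^ 2 = norm a ^ 2 + b ^ 2"
  by (simp add: norm_Pair)

lemma epi_outside:
  assumes adm: "admissible R f" and z: "z \<in> epigraph f"
  shows "norm z > R"
proof -
  obtain t y where zz: "z = (t, y)" and fy: "f t \<le> y" using z by (auto simp: epigraph_def)
  have "f t > 0" using adm by (auto simp: admissible_def)
  hence "(f t)^2 \<le> y^2" using fy by (simp add: power_mono)
  moreover have "norm t ^ 2 + (f t)^2 > R^2" using adm by (auto simp: admissible_def)
  ultimately have "norm z ^ 2 > R ^ 2" by (simp add: zz norm_Pair_sq)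
  thus ?thesis by (smt (verit) norm_ge_zero power_mono)
qed

lemma norm_diff_sq: "norm (a - b :: 'a::real_inner)^2 = norm a^2 - 2 * (a \<bullet> b) + norm b^2"
  by (simp add: power2_norm_eq_inner inner_diff_left inner_diff_right inner_commute)

lemma core:
  fixes f :: "real^'n \<Rightarrow> real"
  assumes adm: "admissible R f" and R: "R > 0" and tD: "t \<in> D_f R f"
  defines "w \<equiv> sqrt (1 + norm (grad f t)^2)"
  defines "\<mu> \<equiv> (norm t^2 + f t^2 - R^2) / (2*w*(R - alpha_f f t))"
  shows "\<mu> > 0" "w > 0" "x_f R f t = t + \<mu> *\<^sub>R grad f t" "y_f R f t = f t - \<mu>"
    "norm (x_f R f t, y_f R f t) = R + \<mu>*w"
    "infdist (x_f R f t, y_f R f t) (epigraph f) = \<mu>*w"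
    "dist (x_f R f t, y_f R f t) (t, f t) = \<mu>*w"
    "(x_f R f t, y_f R f t) \<in> equidistant_set (cball 0 R) (epigraph f)"
proof -
  let ?g = "grad f t" let ?a = "alpha_f f t"
  have C2: "C2 f" and cv: "convex_on UNIV f" and N: "norm t^2 + f t^2 > R^2"
    using adm by (auto simp: admissible_def)
  have Ra: "R - ?a > 0" using tD by (simp add: D_f_def)
  show wpos: "w > 0" unfolding w_def by (simp add: add_pos_nonneg)
  have w2: "w^2 = 1 + norm ?g ^2" unfolding w_def by (simp add: add_nonneg_nonneg)
  have aw: "?a * w = t \<bullet> ?g - f t" unfolding alpha_f_def w_def[symmetric] using wpos by simp
  show mpos: "\<mu> > 0" unfolding \<mu>_def using N Ra wpos by (intro divide_pos_pos) auto
  have muN: "2*\<mu>*w*(R - ?a) = norm t^2 + f t^2 - R^2" unfolding \<mu>_def using Ra wpos by (simp add: field_simps)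
  show xf: "x_f R f t = t + \<mu> *\<^sub>R ?g" unfolding x_f_def \<mu>_def w_def by (simp add: field_simps)
  show yf: "y_f R f t = f t - \<mu>" unfolding y_f_def \<mu>_def w_def by (simp add: field_simps)
  let ?p = "(x_f R f t, y_f R f t)" let ?q = "(t, f t)"
  have pq: "?p - ?q = (\<mu> *\<^sub>R ?g, - \<mu>)" using xf yf by simp
  have "norm (?p - ?q) ^2 = (\<mu>*w)^2" unfolding pq norm_Pair_sq
    by (simp add: power_mult_distrib w2 algebra_simps)
  hence dpq: "norm (?p - ?q) = \<mu> * w"
    by (rule power2_eq_imp_eq) (use mpos wpos in auto)
  thus "dist ?p ?q = \<mu> * w" by (simp add: dist_norm)
  have "norm ?p ^ 2 = norm (t + \<mu> *\<^sub>R ?g)^2 + (f t - \<mu>)^2" by (simp add: xf yf norm_Pair_sq)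
  also have "\<dots> = norm t^2 + 2*\<mu>*(t \<bullet> ?g) + \<mu>^2 * norm ?g^2 + (f t)^2 - 2*\<mu>*f t + \<mu>^2"
  proof -
    have "norm (t + \<mu> *\<^sub>R ?g)^2 = norm t^2 + 2*\<mu>*(t \<bullet> ?g) + \<mu>^2 * norm ?g^2"
      by (simp only: power2_norm_eq_inner inner_add_left inner_add_right inner_scaleR_left inner_scaleR_right)
         (simp add: inner_commute power2_eq_square algebra_simps)
    thus ?thesis by (simp add: power2_eq_square algebra_simps)
  qed
  also have "\<dots> = (R + \<mu>*w)^2"
  proof -
    have tg: "t \<bullet> ?g = ?a * w + f t" using aw by simp
    have g2: "norm ?g ^2 = w^2 - 1" using w2 by simp
    have e1: "norm t^2 + 2*\<mu>*(t \<bullet> ?g) + \<mu>^2 * norm ?g^2 + (f t)^2 - 2*\<mu>*f t + \<mu>^2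
       = (norm t^2 + f t^2) + 2*\<mu>*w*?a + \<mu>^2 * w^2" unfolding tg g2 by (simp add: algebra_simps)
    have e2: "(R + \<mu>*w)^2 = R^2 + 2*\<mu>*w*(R - ?a) + 2*\<mu>*w*?a + \<mu>^2 * w^2" by (simp add: power2_eq_square algebra_simps)
    show ?thesis unfolding e1 e2 muN by simp
  qed
  finally have "norm ?p ^2 = (R + \<mu>*w)^2" .
  thus np: "norm ?p = R + \<mu>*w"
    by (rule power2_eq_imp_eq) (use mpos wpos R in auto)
  have qL: "?q \<in> epigraph f" by (simp add: epigraph_def)
  show iL: "infdist ?p (epigraph f) = \<mu>*w"
  proof (rule antisym)
    show "infdist ?p (epigraph f) \<le> \<mu>*w" using infdist_le[OF qL, of ?p] dpq by (simp add: dist_norm)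
    show "\<mu>*w \<le> infdist ?p (epigraph f)"
    proof (rule infdist_ge)
      show "epigraph f \<noteq> {}" using qL by blast
      fix z assume "z \<in> epigraph f"
      then obtain s y where zz: "z = (s, y)" and fy: "f s \<le> y" by (auto simp: epigraph_def)
      have gi: "f s \<ge> f t + ?g \<bullet> (s - t)" using convex_grad_ineq[OF cv C2_diff[OF C2]] .
      have ip: "(?p - ?q) \<bullet> (z - ?q) \<le> 0"
      proof -
        have "(?p - ?q) \<bullet> (z - ?q) = \<mu> * (?g \<bullet> (s - t) - (y - f t))" unfolding pq zz
          by (simp add: algebra_simps)
        also have "\<dots> \<le> 0" using gi fy mpos by (intro mult_nonneg_nonpos) auto
        finally show ?thesis .
      qed
      have "norm (?p - z)^2 = norm ((?p - ?q) - (z - ?q))^2" by (simp only: diff_diff_eq2 diff_add_cancel)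
      also have "\<dots> = norm (?p - ?q)^2 - 2 * ((?p - ?q) \<bullet> (z - ?q)) + norm (z - ?q)^2"
        by (rule norm_diff_sq)
      also have "\<dots> = (\<mu>*w)^2 - 2 * ((?p - ?q) \<bullet> (z - ?q)) + norm (z - ?q)^2" by (simp only: dpq)
      finally have "norm (?p - z)^2 \<ge> (\<mu>*w)^2" using ip zero_le_power2[of "norm (z - ?q)"] by linarith
      hence "norm (?p - z) \<ge> \<mu>*w" by (rule power2_le_imp_le) simp
      thus "\<mu>*w \<le> dist ?p z" by (simp add: dist_norm)
    qed
  qed
  have "infdist ?p (cball 0 R) = \<mu>*w" using infdist_cball[of R ?p] np R mpos wpos by simp
  thus "?p \<in> equidistant_set (cball 0 R) (epigraph f)" using iL by (simp add: equidistant_set_def)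
qed



lemma inverse_param:
  fixes f :: "real^'n \<Rightarrow> real"
  assumes adm: "admissible R f" and R: "R > 0"
    and pE: "p \<in> equidistant_set (cball 0 R) (epigraph f)"
  shows "\<exists>t \<in> D_f R f. p = (x_f R f t, y_f R f t)"
proof -
  have C2: "C2 f" and N0: "\<forall>t. norm t^2 + f t^2 > R^2" using adm by (auto simp: admissible_def)
  let ?L = "epigraph f" let ?K = "cball (0::(real^'n) \<times> real) R"
  have cL: "closed ?L" by (rule epi_closed[OF C2])
  have neL: "?L \<noteq> {}" by (auto simp: epigraph_def)
  have eq: "infdist p ?K = infdist p ?L" using pE by (simp add: equidistant_set_def)
  have pL: "p \<notin> ?L"
  proof
    assume "p \<in> ?L"
    hence "infdist p ?K = 0" using eq by simp
    hence "p \<in> ?K" using in_closed_iff_infdist_zero[of ?K p] R by simp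
    with epi_outside[OF adm \<open>p \<in> ?L\<close>] show False by simp
  qed
  have pK: "p \<notin> ?K"
  proof
    assume "p \<in> ?K"
    hence "infdist p ?L = 0" using eq by simp
    hence "p \<in> ?L" using in_closed_iff_infdist_zero[OF cL neL] by simp
    with pL show False by simp
  qed
  obtain q where qL: "q \<in> ?L" and qmin: "\<And>z. z \<in> ?L \<Longrightarrow> dist p q \<le> dist p z"
    using distance_attains_inf[OF cL neL, of p] by blast
  have iL: "infdist p ?L = dist p q"
    by (rule antisym[OF infdist_le[OF qL] infdist_ge[OF neL qmin]])
  have pq: "p \<noteq> q" using pL qL by blast
  obtain t y0 where qq: "q = (t, y0)" by (cases q)
  obtain a b where pp: "p = (a, b)" by (cases p)
  have y0: "y0 = f t"
  proof (rule ccontr)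
    assume "y0 \<noteq> f t"
    hence "f t < y0" using qL qq by (auto simp: epigraph_def)
    hence "q \<in> {z. f (fst z) < snd z}" using qq by simp
    then obtain e where e: "e > 0" "ball q e \<subseteq> {z. f (fst z) < snd z}"
      using epi_open[OF C2] open_contains_ball by blast
    define d where "d = dist p q"
    have dpos: "d > 0" using pq by (simp add: d_def)
    define \<theta> where "\<theta> = min (1/2) (e / (2*d))"
    have th: "\<theta> > 0" "\<theta> < 1" "\<theta> * d < e" using dpos e
      by (auto simp: \<theta>_def min_def field_simps)
    define z where "z = q + \<theta> *\<^sub>R (p - q)"
    have "dist q z = \<theta> * d" using th by (simp add: z_def d_def dist_norm dist_commute)
    hence "z \<in> ball q e" using th by simp
    hence "z \<in> ?L" using e by (auto simp: epigraph_def)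
    moreover have "dist p z = (1 - \<theta>) * d"
    proof -
      have "p - z = (1 - \<theta>) *\<^sub>R (p - q)" by (simp add: z_def algebra_simps)
      thus ?thesis using th by (simp add: dist_norm d_def)
    qed
    ultimately have "d \<le> (1 - \<theta>) * d" using qmin d_def by metis
    thus False using th dpos by (simp add: algebra_simps mult_le_0_iff)
  qed
  let ?g = "grad f t"
  define \<phi> where "\<phi> = (\<lambda>s. (a - s) \<bullet> (a - s) + (b - f s) * (b - f s))"
  have phi_dist: "\<phi> s = (dist p (s, f s))^2" for s
  proof -
    have "(dist p (s, f s))^2 = norm (a - s)^2 + (b - f s)^2" by (simp add: pp dist_norm norm_Pair_sq)
    thus ?thesis by (simp add: \<phi>_def power2_norm_eq_inner[symmetric] power2_eq_square[symmetric])
  qed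
  have phimin: "\<forall>s\<in>UNIV. \<phi> t \<le> \<phi> s"
  proof
    fix s
    have "dist p (t, f t) \<le> dist p (s, f s)" using qmin[of "(s, f s)"] qq y0 by (simp add: epigraph_def)
    thus "\<phi> t \<le> \<phi> s" unfolding phi_dist by (simp add: power_mono)
  qed
  have dphi: "(\<phi> has_derivative (\<lambda>v. - 2 * ((a - t) \<bullet> v) - 2 * (b - f t) * (?g \<bullet> v))) (at t)"
    unfolding \<phi>_def
    by (rule derivative_eq_intros C2_diff[OF C2] refl | simp add: inner_commute algebra_simps)+
  have D0: "(\<lambda>v. - 2 * ((a - t) \<bullet> v) - 2 * (b - f t) * (?g \<bullet> v)) = (\<lambda>v. 0)"
    by (rule differential_zero_maxmin[where S=UNIV, OF _ _ dphi]) (use phimin in auto)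
  define v where "v = (a - t) + (b - f t) *\<^sub>R ?g"
  have "- 2 * ((a - t) \<bullet> v) - 2 * (b - f t) * (?g \<bullet> v) = 0" using fun_cong[OF D0, of v] by simp
  hence "v \<bullet> v = 0" unfolding v_def by (simp add: inner_add_left algebra_simps)
  hence "v = 0" by simp
  define \<mu> where "\<mu> = f t - b"
  have a_eq: "a = t + \<mu> *\<^sub>R ?g" using \<open>v = 0\<close> unfolding v_def \<mu>_def by (simp add: algebra_simps)
  have b_eq: "b = f t - \<mu>" by (simp add: \<mu>_def)
  have mu_nn: "\<mu> \<ge> 0"
  proof (rule ccontr)
    assume "\<not> \<mu> \<ge> 0"
    hence bf: "b > f t" by (simp add: \<mu>_def)
    hence "(t, b) \<in> ?L" by (simp add: epigraph_def)
    hence "dist p q \<le> dist p (t, b)" by (rule qmin)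
    hence "(dist p q)^2 \<le> (dist p (t, b))^2" by (simp add: power_mono)
    hence "norm (a - t)^2 + (b - f t)^2 \<le> norm (a - t)^2"
      by (simp add: pp qq y0 dist_norm norm_Pair_sq)
    thus False using bf by (smt (verit) zero_less_power2)
  qed
  have mu_pos: "\<mu> > 0"
  proof (rule ccontr)
    assume "\<not> \<mu> > 0" hence "\<mu> = 0" using mu_nn by simp
    hence "p = q" using a_eq b_eq pp qq y0 by simp
    thus False using pq by simp
  qed
  define w where "w = sqrt (1 + norm ?g ^ 2)"
  have wpos: "w > 0" unfolding w_def by (simp add: add_pos_nonneg)
  have w2: "w^2 = 1 + norm ?g ^2" unfolding w_def by (simp add: add_nonneg_nonneg)
  let ?al = "alpha_f f t"
  have aw: "?al * w = t \<bullet> ?g - f t" unfolding alpha_f_def w_def[symmetric] using wpos by simp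
  have "(dist p q)^2 = (\<mu> * w)^2"
    by (simp add: pp qq y0 a_eq b_eq dist_norm norm_Pair_sq power_mult_distrib w2 algebra_simps)
  hence dq: "dist p q = \<mu> * w" by (rule power2_eq_imp_eq) (use mu_pos wpos in auto)
  have npR: "norm p \<ge> R" using pK by simp
  have "infdist p ?K = norm p - R" by (rule infdist_cball) (use R npR in auto)
  hence np: "norm p = R + \<mu> * w" using eq iL dq by simp
  have "norm p ^ 2 = norm (t + \<mu> *\<^sub>R ?g)^2 + (f t - \<mu>)^2" by (simp add: pp a_eq b_eq norm_Pair_sq)
  also have "\<dots> = norm t^2 + 2*\<mu>*(t \<bullet> ?g) + \<mu>^2 * norm ?g^2 + (f t)^2 - 2*\<mu>*f t + \<mu>^2"
  proof -
    have "norm (t + \<mu> *\<^sub>R ?g)^2 = norm t^2 + 2*\<mu>*(t \<bullet> ?g) + \<mu>^2 * norm ?g^2"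
      by (simp only: power2_norm_eq_inner inner_add_left inner_add_right inner_scaleR_left inner_scaleR_right)
         (simp add: inner_commute power2_eq_square algebra_simps)
    thus ?thesis by (simp add: power2_eq_square algebra_simps)
  qed
  also have "\<dots> = (norm t^2 + f t^2) + 2*\<mu>*w*?al + \<mu>^2 * w^2"
  proof -
    have tg: "t \<bullet> ?g = ?al * w + f t" using aw by simp
    have g2: "norm ?g ^2 = w^2 - 1" using w2 by simp
    show ?thesis unfolding tg g2 by (simp add: algebra_simps)
  qed
  finally have e1: "norm p ^ 2 = (norm t^2 + f t^2) + 2*\<mu>*w*?al + \<mu>^2 * w^2" .
  have e2: "(R + \<mu>*w)^2 = R^2 + 2*\<mu>*w*(R - ?al) + 2*\<mu>*w*?al + \<mu>^2 * w^2"
    by (simp add: power2_eq_square algebra_simps)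
  have Neq: "norm t^2 + f t^2 - R^2 = 2*\<mu>*w*(R - ?al)" using e1 e2 np by simp
  have "2*\<mu>*w*(R - ?al) > 0" using Neq spec[OF N0, of t] by linarith
  hence Ra: "R - ?al > 0" using mu_pos wpos by (auto simp add: zero_less_mult_iff dest: mult_pos_pos[of \<mu> w])
  hence tD: "t \<in> D_f R f" by (simp add: D_f_def)
  have mu_eq: "\<mu> = (norm t^2 + f t^2 - R^2) / (2*w*(R - ?al))"
    using Neq Ra wpos by (simp add: field_simps)
  have "p = (x_f R f t, y_f R f t)"
    using core(3,4)[OF adm R tD] a_eq b_eq pp mu_eq by (simp add: w_def)
  thus ?thesis using tD by blast
qed



lemma h_lemma:
  fixes f G :: "real^'n \<Rightarrow> real"
  assumes adm: "admissible R f" and R: "R > 0" and GC2: "C2 G"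
    and E: "equidistant_set (cball 0 R) (epigraph f) = {(x, G x) | x. True}"
    and tD: "t \<in> D_f R f"
  shows "hmap R G (x_f R f t) = t"
proof -
  have N0: "\<forall>t. norm t^2 + f t^2 > R^2" using adm by (auto simp: admissible_def)
  define w where "w = sqrt (1 + norm (grad f t)^2)"
  define \<mu> where "\<mu> = (norm t^2 + f t^2 - R^2) / (2*w*(R - alpha_f f t))"
  note cr = core[OF adm R tD, folded w_def, folded \<mu>_def]
  define x where "x = x_f R f t"
  define lam where "lam = \<mu> * w"
  have lpos: "lam > 0" using cr(1,2) by (simp add: lam_def)
  have "(x, y_f R f t) \<in> {(x, G x) | x. True}" using cr(8) E by (simp add: x_def)
  hence yG: "y_f R f t = G x" by simp
  define p where "p = (x, G x)"
  define q where "q = (t, f t)"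
  define \<rho> where "\<rho> = R + lam"
  have rpos: "\<rho> > 0" using R lpos by (simp add: \<rho>_def)
  have np: "norm p = \<rho>" using cr(5) yG by (simp add: p_def x_def \<rho>_def lam_def)
  have dpq: "norm (p - q) = lam" using cr(7) yG by (simp add: p_def q_def x_def lam_def dist_norm)
  define \<psi> where "\<psi> = (\<lambda>x'. norm (x', G x') - norm ((x', G x') - q) - R)"
  have psi_le: "\<forall>x'\<in>UNIV. \<psi> x' \<le> \<psi> x"
  proof
    fix x'
    have "(x', G x') \<in> equidistant_set (cball 0 R) (epigraph f)" using E by blast
    hence "infdist (x', G x') (cball 0 R) = infdist (x', G x') (epigraph f)" by (simp add: equidistant_set_def)
    moreover have "infdist (x', G x') (epigraph f) \<le> dist (x', G x') q" by (rule infdist_le) (simp add: q_def epigraph_def)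
    moreover have "norm (x', G x') - R \<le> infdist (x', G x') (cball 0 R)" by (rule infdist_cball_ge) (use R in simp)
    ultimately have "\<psi> x' \<le> 0" by (simp add: \<psi>_def dist_norm)
    moreover have "\<psi> x = 0" using np dpq by (simp add: \<psi>_def p_def \<rho>_def)
    ultimately show "\<psi> x' \<le> \<psi> x" by simp
  qed
  let ?g = "grad G x"
  have dP: "((\<lambda>x'. (x', G x')) has_derivative (\<lambda>e. (e, ?g \<bullet> e))) (at x)"
    by (intro has_derivative_Pair has_derivative_ident C2_diff[OF GC2])
  have dP2: "((\<lambda>x'. (x', G x') - q) has_derivative (\<lambda>e. (e, ?g \<bullet> e))) (at x)"
    using has_derivative_diff[OF dP has_derivative_const[of q]] by simp
  have p0: "p \<noteq> 0" using np rpos by auto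
  have pq0: "p - q \<noteq> 0" using dpq lpos by auto
  have dN1: "((\<lambda>x'. norm (x', G x')) has_derivative (\<lambda>e. (e, ?g \<bullet> e) \<bullet> sgn p)) (at x)"
    using has_derivative_compose[OF dP has_derivative_norm[OF p0, unfolded p_def]] by (simp add: p_def)
  have dN2: "((\<lambda>x'. norm ((x', G x') - q)) has_derivative (\<lambda>e. (e, ?g \<bullet> e) \<bullet> sgn (p - q))) (at x)"
    using has_derivative_compose[OF dP2 has_derivative_norm[OF pq0, unfolded p_def]] by (simp add: p_def)
  have dpsi: "(\<psi> has_derivative (\<lambda>e. (e, ?g \<bullet> e) \<bullet> sgn p - (e, ?g \<bullet> e) \<bullet> sgn (p - q) - 0)) (at x)"
    unfolding \<psi>_def by (intro has_derivative_diff dN1 dN2 has_derivative_const)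
  have D0: "(\<lambda>e. (e, ?g \<bullet> e) \<bullet> sgn p - (e, ?g \<bullet> e) \<bullet> sgn (p - q) - 0) = (\<lambda>v. 0)"
    by (rule differential_zero_maxmin[where S=UNIV, OF _ _ dpsi]) (use psi_le in auto)
  define v1 where "v1 = (1/\<rho>) *\<^sub>R x - (1/lam) *\<^sub>R (x - t)"
  define v2 where "v2 = G x / \<rho> - (G x - f t) / lam"
  have sp: "sgn p = ((1/\<rho>) *\<^sub>R x, G x / \<rho>)" using np by (simp add: sgn_div_norm p_def inverse_eq_divide)
  have spq: "sgn (p - q) = ((1/lam) *\<^sub>R (x - t), (G x - f t) / lam)" using dpq by (simp add: sgn_div_norm p_def q_def inverse_eq_divide)
  have ee: "e \<bullet> (v1 + v2 *\<^sub>R ?g) = 0" for e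
  proof -
    have "(e, ?g \<bullet> e) \<bullet> sgn p - (e, ?g \<bullet> e) \<bullet> sgn (p - q) - 0 = 0" using fun_cong[OF D0, of e] by simp
    thus ?thesis unfolding sp spq v1_def v2_def
      by (simp add: inner_diff_right inner_add_right inner_commute algebra_simps diff_divide_distrib)
  qed
  have "(v1 + v2 *\<^sub>R ?g) \<bullet> (v1 + v2 *\<^sub>R ?g) = 0" by (rule ee)
  hence v1eq: "v1 = - v2 *\<^sub>R ?g" by (simp add: eq_neg_iff_add_eq_0)
  have xt: "x - t = lam *\<^sub>R ((1/\<rho>) *\<^sub>R x + v2 *\<^sub>R ?g)"
  proof -
    have "(1/lam) *\<^sub>R (x - t) = (1/\<rho>) *\<^sub>R x + v2 *\<^sub>R ?g" using v1eq unfolding v1_def by (simp add: algebra_simps)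
    hence "lam *\<^sub>R ((1/lam) *\<^sub>R (x - t)) = lam *\<^sub>R ((1/\<rho>) *\<^sub>R x + v2 *\<^sub>R ?g)" by simp
    thus ?thesis using lpos by simp
  qed
  have Gf: "G x - f t = lam * (G x / \<rho> - v2)"
    using lpos unfolding v2_def by (simp add: field_simps)
  have n1: "norm x ^2 + (G x)^2 = \<rho>^2" using np by (simp add: p_def norm_Pair_sq[symmetric])
  have n2: "norm (x - t)^2 + (G x - f t)^2 = lam^2" using dpq by (simp add: p_def q_def norm_Pair_sq[symmetric])
  have key: "2 * v2 * (x \<bullet> ?g - G x) / \<rho> + v2^2 * (1 + norm ?g^2) = 0"
  proof -
    have "norm ((1/\<rho>) *\<^sub>R x + v2 *\<^sub>R ?g)^2 + (G x / \<rho> - v2)^2 = 1"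
    proof -
      have "lam^2 * (norm ((1/\<rho>) *\<^sub>R x + v2 *\<^sub>R ?g)^2 + (G x / \<rho> - v2)^2) = lam^2"
      proof -
        have "norm (lam *\<^sub>R ((1/\<rho>) *\<^sub>R x + v2 *\<^sub>R ?g))^2 + (lam * (G x / \<rho> - v2))^2 = lam^2"
          using n2 unfolding xt Gf .
        thus ?thesis by (simp only: norm_scaleR power_mult_distrib power2_abs distrib_left)
      qed
      thus ?thesis using lpos by simp
    qed
    moreover have "norm ((1/\<rho>) *\<^sub>R x + v2 *\<^sub>R ?g)^2 = norm x^2 / \<rho>^2 + 2 * v2 * (x \<bullet> ?g) / \<rho> + v2^2 * norm ?g^2"
      by (simp only: power2_norm_eq_inner inner_add_left inner_add_right inner_scaleR_left inner_scaleR_right)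
         (simp add: inner_commute power2_eq_square algebra_simps)
    moreover have "(G x / \<rho> - v2)^2 = (G x)^2 / \<rho>^2 - 2 * v2 * G x / \<rho> + v2^2"
      by (simp add: power2_eq_square algebra_simps)
    moreover have "norm x^2 / \<rho>^2 + (G x)^2 / \<rho>^2 = 1" using n1 rpos by (simp add: add_divide_distrib[symmetric])
    ultimately show ?thesis by (simp add: algebra_simps diff_divide_distrib add_divide_distrib)
  qed
  have v2nz: "v2 \<noteq> 0"
  proof
    assume v0: "v2 = 0"
    have tt: "t = (R/\<rho>) *\<^sub>R x"
    proof -
      have "t = x - (lam/\<rho>) *\<^sub>R x" using xt v0 by (simp add: algebra_simps)
      also have "\<dots> = (1 - lam/\<rho>) *\<^sub>R x" by (simp add: algebra_simps)
      also have "1 - lam/\<rho> = R/\<rho>" using rpos by (simp add: \<rho>_def field_simps)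
      finally show ?thesis .
    qed
    have ft: "f t = (R/\<rho>) * G x"
    proof -
      have "f t = G x - lam * G x / \<rho>" using Gf v0 by (simp add: algebra_simps)
      also have "\<dots> = (R/\<rho>) * G x" using rpos by (simp add: \<rho>_def field_simps)
      finally show ?thesis .
    qed
    have "norm t^2 + f t^2 = (R/\<rho>)^2 * (norm x^2 + (G x)^2)"
    proof -
      have nt: "norm t^2 = (R/\<rho>)^2 * norm x^2" using tt R rpos by (simp add: power_mult_distrib power_divide)
      show ?thesis unfolding nt ft by (simp add: power_mult_distrib power_divide algebra_simps)
    qed
    also have "\<dots> = R^2" using n1 rpos by (simp add: power_divide)
    finally have "norm t^2 + f t^2 = R^2" .
    with spec[OF N0, of t] show False by simp
  qed
  have v2eq: "\<rho> * v2 = 2 * (G x - x \<bullet> ?g) / (1 + norm ?g^2)"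
  proof -
    have "v2 * (2 * (x \<bullet> ?g - G x) / \<rho> + v2 * (1 + norm ?g^2)) = 0" using key by (simp add: power2_eq_square algebra_simps)
    hence "2 * (x \<bullet> ?g - G x) / \<rho> + v2 * (1 + norm ?g^2) = 0" using v2nz by simp
    moreover have "1 + norm ?g^2 > 0" by (simp add: add_pos_nonneg)
    ultimately show ?thesis using rpos by (simp add: field_simps)
  qed
  have sq: "sqrt (norm x ^ 2 + G x ^ 2) = \<rho>" using n1 rpos by simp
  have "hmap R G x = x - (lam / \<rho>) *\<^sub>R (x + (\<rho> * v2) *\<^sub>R ?g)"
    unfolding hmap_def sq v2eq by (simp add: \<rho>_def)
  also have "\<dots> = x - lam *\<^sub>R ((1/\<rho>) *\<^sub>R x + v2 *\<^sub>R ?g)" using rpos by (simp add: algebra_simps)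
  also have "\<dots> = t" using xt by (simp add: algebra_simps)
  finally show ?thesis by (simp add: x_def)
qed


theorem theorem12:
  fixes R :: real and G :: "real^'n \<Rightarrow> real" and J :: "(real^'n) set"
  assumes R: "R > 0"
    and G_C2: "C2 G"
    and G_pos: "\<forall>x. norm x ^ 2 + G x ^ 2 > 0"
    and h_bij: "bij_betw (hmap R G) UNIV J"
    and J_open: "open J" and J0: "0 \<in> J"
    and h_jac: "\<forall>x. \<exists>h'. (hmap R G has_derivative h') (at x) \<and> det (matrix h') \<noteq> 0"
  shows "(\<exists>f. admissible R f \<and>
            equidistant_set (cball 0 R) (epigraph f) = {(x, G x) | x. True})
     \<longleftrightarrow> (\<exists>f. admissible R f \<and> D_f R f = J \<and>
            (\<forall>t\<in>J. x_f R f t = inv (hmap R G) t \<and> y_f R f t = G (inv (hmap R G) t)))"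
proof -
  let ?h = "hmap R G"
  have injh: "inj ?h" using h_bij by (simp add: bij_betw_def)
  have Jr: "J = range ?h" using h_bij by (simp add: bij_betw_def)
  have invh: "inv ?h (?h x) = x" for x using injh by simp
  show ?thesis
  proof
    assume "\<exists>f. admissible R f \<and> equidistant_set (cball 0 R) (epigraph f) = {(x, G x) | x. True}"
    then obtain f where adm: "admissible R f"
      and E: "equidistant_set (cball 0 R) (epigraph f) = {(x, G x) | x. True}" by blast
    have hx: "?h (x_f R f t) = t" if "t \<in> D_f R f" for t
      by (rule h_lemma[OF adm R G_C2 E that])
    have DJ: "D_f R f = J"
    proof
      show "D_f R f \<subseteq> J" using hx Jr by (metis image_subset_iff rangeI subsetI)
      show "J \<subseteq> D_f R f"
      proof
        fix t assume "t \<in> J"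
        then obtain x where tx: "t = ?h x" using Jr by blast
        have "(x, G x) \<in> equidistant_set (cball 0 R) (epigraph f)" using E by blast
        then obtain s where sD: "s \<in> D_f R f" and xs: "(x, G x) = (x_f R f s, y_f R f s)"
          using inverse_param[OF adm R] by blast
        have "?h x = s" using hx[OF sD] xs by simp
        thus "t \<in> D_f R f" using tx sD by simp
      qed
    qed
    have "\<forall>t\<in>J. x_f R f t = inv ?h t \<and> y_f R f t = G (inv ?h t)"
    proof
      fix t assume "t \<in> J"
      hence tD: "t \<in> D_f R f" using DJ by simp
      have xi: "inv ?h t = x_f R f t" using invh[of "x_f R f t"] hx[OF tD] by simp
      have "(x_f R f t, y_f R f t) \<in> {(x, G x) | x. True}" using core(8)[OF adm R tD] E by simp
      hence "y_f R f t = G (x_f R f t)" by simp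
      thus "x_f R f t = inv ?h t \<and> y_f R f t = G (inv ?h t)" using xi by simp
    qed
    thus "\<exists>f. admissible R f \<and> D_f R f = J \<and>
            (\<forall>t\<in>J. x_f R f t = inv ?h t \<and> y_f R f t = G (inv ?h t))" using adm DJ by blast
  next
    assume "\<exists>f. admissible R f \<and> D_f R f = J \<and>
            (\<forall>t\<in>J. x_f R f t = inv ?h t \<and> y_f R f t = G (inv ?h t))"
    then obtain f where adm: "admissible R f" and DJ: "D_f R f = J"
      and par: "\<forall>t\<in>J. x_f R f t = inv ?h t \<and> y_f R f t = G (inv ?h t)" by blast
    have "equidistant_set (cball 0 R) (epigraph f) = {(x, G x) | x. True}"
    proof
      show "equidistant_set (cball 0 R) (epigraph f) \<subseteq> {(x, G x) | x. True}"
      proof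
        fix p assume "p \<in> equidistant_set (cball 0 R) (epigraph f)"
        then obtain t where tD: "t \<in> D_f R f" and pt: "p = (x_f R f t, y_f R f t)"
          using inverse_param[OF adm R] by blast
        have "p = (inv ?h t, G (inv ?h t))" using par tD DJ pt by simp
        thus "p \<in> {(x, G x) | x. True}" by blast
      qed
      show "{(x, G x) | x. True} \<subseteq> equidistant_set (cball 0 R) (epigraph f)"
      proof
        fix p assume "p \<in> {(x, G x) | x. True}"
        then obtain x where px: "p = (x, G x)" by blast
        have tJ: "?h x \<in> J" using Jr by simp
        hence tD: "?h x \<in> D_f R f" using DJ by simp
        have "(x_f R f (?h x), y_f R f (?h x)) = (x, G x)" using par tJ invh[of x] by simp
        thus "p \<in> equidistant_set (cball 0 R) (epigraph f)" using core(8)[OF adm R tD] px by simp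
      qed
    qed
    thus "\<exists>f. admissible R f \<and> equidistant_set (cball 0 R) (epigraph f) = {(x, G x) | x. True}"
      using adm by blast
  qed
qed

end
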